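(* Let $n\ge2$ and let $c_1,c_2\ge 0$ satisfy $c_1-3c_2-3\ge0$, $c_2+1\ge 2n$ and $c_1\ge 3c_2+3+(c_2+1)^2$. Let $\mathcal{A}=(a_{i_1i_2i_3})$ be the third order $n$-dimensional tensor with $a_{i_1i_2i_3}=c_1$ if $i_1=i_2=i_3$; $a_{i_1i_2i_3}=c_2$ if not all indices are equal but at least two of them are equal; and $a_{i_1i_2i_3}=-1$ if $i_1,i_2,i_3$ are pairwise distinct. Then $\mathcal{A}$ is a strongly SOS tensor. In particular (when $n\ge3$, so that $\mathcal{A}$ has entries equal to $-1$), a strongly SOS tensor may have negative entries.
   Context: For a symmetric third order $n$-dimensional tensor $\mathcal{A}$ and $\mathbf{x}\in\mathbb{R}^n$, let $F_i(\mathbf{x})=\sum_{i_2,i_3=1}^n a_{ii_2i_3}x_{i_2}x_{i_3}$. $\mathcal{A}$ is a strongly SOS tensor if each $F_i$, $i=1,\dots,n$, is a sum of squares of real polynomials. *)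

theory Defs
  imports "HOL-Analysis.Analysis"
begin

text \<open>Real polynomial functions on R^n (n = CARD('n)); over the reals these are exactly
  the functions induced by real polynomials in the n coordinates.\<close>
inductive_set poly_fun :: "(real ^ 'n \<Rightarrow> real) set" where
  pf_const: "(\<lambda>x. c) \<in> poly_fun"
| pf_var: "(\<lambda>x. x $ i) \<in> poly_fun"
| pf_add: "p \<in> poly_fun \<Longrightarrow> q \<in> poly_fun \<Longrightarrow> (\<lambda>x. p x + q x) \<in> poly_fun"
| pf_mult: "p \<in> poly_fun \<Longrightarrow> q \<in> poly_fun \<Longrightarrow> (\<lambda>x. p x * q x) \<in> poly_fun"

definition is_SOS :: "(real ^ 'n \<Rightarrow> real) \<Rightarrow> bool" where
  "is_SOS f \<longleftrightarrow> (\<exists>ps. (\<forall>p\<in>set ps. p \<in> poly_fun) \<and> (\<forall>x. f x = (\<Sum>p\<leftarrow>ps. (p x)^2)))"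

definition symmetric_tensor3 :: "('n \<Rightarrow> 'n \<Rightarrow> 'n \<Rightarrow> real) \<Rightarrow> bool" where
  "symmetric_tensor3 A \<longleftrightarrow> (\<forall>i j k. A i j k = A j i k \<and> A i j k = A i k j)"

definition tensor_F :: "('n::finite \<Rightarrow> 'n \<Rightarrow> 'n \<Rightarrow> real) \<Rightarrow> 'n \<Rightarrow> real ^ 'n \<Rightarrow> real" where
  "tensor_F A i x = (\<Sum>j\<in>UNIV. \<Sum>k\<in>UNIV. A i j k * x $ j * x $ k)"

definition strongly_SOS :: "('n::finite \<Rightarrow> 'n \<Rightarrow> 'n \<Rightarrow> real) \<Rightarrow> bool" where
  "strongly_SOS A \<longleftrightarrow> symmetric_tensor3 A \<and> (\<forall>i. is_SOS (tensor_F A i))"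

end

theory Submission
  imports Defs
begin

lemma pf_sum: "(\<forall>j\<in>J. g j \<in> poly_fun) \<Longrightarrow> (\<lambda>x. \<Sum>j\<in>J. g j x) \<in> poly_fun"
proof (induction J rule: infinite_finite_induct)
  case (infinite A) then show ?case by (simp add: pf_const)
next
  case empty then show ?case by (simp add: pf_const)
next
  case (insert a F) then show ?case by (simp add: pf_add)
qed

lemma pf_scale: "p \<in> poly_fun \<Longrightarrow> (\<lambda>x. c * p x) \<in> poly_fun"
  using pf_mult[OF pf_const] by blast

lemma F_formula:
  fixes A :: "'n::finite \<Rightarrow> 'n \<Rightarrow> 'n \<Rightarrow> real"
  fixes i :: 'n
  assumes A_def: "\<And>i j k. A i j k =
       (if i = j \<and> j = k then c1
        else if i \<noteq> j \<and> j \<noteq> k \<and> i \<noteq> k then -1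
        else c2)"
  defines "U \<equiv> UNIV - {i}"
  shows "tensor_F A i x = c1 * (x$i)^2 + 2 * c2 * x$i * (\<Sum>j\<in>U. x$j)
          + (c2+1) * (\<Sum>j\<in>U. (x$j)^2) - (\<Sum>j\<in>U. x$j)^2"
proof -
  let ?S = "\<Sum>j\<in>U. x$j"
  have split: "\<And>f::'n\<Rightarrow>real. (\<Sum>j\<in>UNIV. f j) = f i + (\<Sum>j\<in>U. f j)"
    unfolding U_def by (metis UNIV_I finite sum.remove)
  have inner: "(\<Sum>k\<in>U. A i j k * x $ j * x $ k) = (c2+1) * (x$j)^2 - x$j * ?S" if j: "j \<in> U" for j
  proof -
    have "(\<Sum>k\<in>U. A i j k * x $ j * x $ k) = A i j j * x$j * x$j + (\<Sum>k\<in>U-{j}. A i j k * x $ j * x $ k)"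
      using j by (simp add: sum.remove)
    also have "(\<Sum>k\<in>U-{j}. A i j k * x $ j * x $ k) = (\<Sum>k\<in>U-{j}. - (x $ j * x $ k))"
      using j by (intro sum.cong) (auto simp: A_def U_def)
    also have "\<dots> = - (x$j * (?S - x$j))"
      using j by (simp add: sum_negf sum_distrib_left[symmetric] sum_diff1)
    also have "A i j j = c2" using j by (simp add: A_def U_def)
    finally show ?thesis by (simp add: power2_eq_square algebra_simps)
  qed
  have "tensor_F A i x = (A i i i * x$i * x$i + (\<Sum>k\<in>U. A i i k * x $ i * x $ k))
      + (\<Sum>j\<in>U. A i j i * x$j * x$i + (\<Sum>k\<in>U. A i j k * x $ j * x $ k))"
    unfolding tensor_F_def by (simp add: split)
  also have "(\<Sum>k\<in>U. A i i k * x $ i * x $ k) = (\<Sum>k\<in>U. c2 * x $ i * x $ k)"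
    by (intro sum.cong) (auto simp: A_def U_def)
  also have "(\<Sum>j\<in>U. A i j i * x$j * x$i + (\<Sum>k\<in>U. A i j k * x $ j * x $ k))
      = (\<Sum>j\<in>U. c2 * x$i * x$j + ((c2+1) * (x$j)^2 - x$j * ?S))"
  proof (intro sum.cong refl)
    fix j assume j: "j \<in> U"
    have "A i j i = c2" using j by (simp add: A_def U_def)
    then show "A i j i * x$j * x$i + (\<Sum>k\<in>U. A i j k * x $ j * x $ k) = c2 * x$i * x$j + ((c2+1) * (x$j)^2 - x$j * ?S)"
      using inner[OF j] by simp
  qed
  also have "\<dots> = c2 * x$i * ?S + (c2+1) * (\<Sum>j\<in>U. (x$j)^2) - ?S * ?S"
    by (simp add: sum.distrib sum_subtractf sum_distrib_left sum_distrib_right) (rule sum.swap)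
  also have "A i i i = c1" by (simp add: A_def)
  also have "(\<Sum>k\<in>U. c2 * x $ i * x $ k) = c2 * x$i * ?S" by (simp add: sum_distrib_left)
  finally show ?thesis
    by (simp add: power2_eq_square algebra_simps)
qed

lemma mean_sq:
  fixes U :: "'a set" and f :: "'a \<Rightarrow> real"
  assumes "finite U" "card U > 0"
  shows "(\<Sum>j\<in>U. (f j - sum f U / card U)^2) = (\<Sum>j\<in>U. (f j)^2) - (sum f U)^2 / card U"
proof -
  let ?m = "real (card U)" and ?S = "sum f U"
  have m: "?m > 0" using assms by simp
  have "(\<Sum>j\<in>U. (f j - ?S / ?m)^2) = (\<Sum>j\<in>U. (f j)^2 - 2 * (?S/?m) * f j + (?S/?m)^2)"
    by (intro sum.cong refl) (simp add: power2_eq_square algebra_simps)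
  also have "\<dots> = (\<Sum>j\<in>U. (f j)^2) - 2 * (?S/?m) * ?S + ?m * (?S/?m)^2"
    by (simp add: sum.distrib sum_subtractf sum_distrib_left)
  also have "\<dots> = (\<Sum>j\<in>U. (f j)^2) - ?S^2 / ?m"
    using m by (simp add: field_simps power2_eq_square)
  finally show ?thesis .
qed

lemma alg_id:
  fixes d m k bb t s q aa :: real
  assumes "d \<noteq> 0" "m \<noteq> 0" "k = (d+1)*m"
  shows "d * (s + bb/d * t)^2 + (aa - bb^2/d) * t^2 + k * (q - s^2 / m)
        = aa * t^2 + 2 * bb * t * s + k * q - s^2"
proof -
  have "d * (s + bb/d * t)^2 = d * s^2 + 2 * bb * t * s + bb^2/d * t^2"
    using assms(1) by (simp add: power2_eq_square field_simps)
  moreover have "k * (q - s^2 / m) = k * q - (d+1) * s^2"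
    using assms(2,3) by (simp add: field_simps)
  ultimately show ?thesis by (simp add: algebra_simps)
qed

lemma sos_i:
  fixes A :: "'n::finite \<Rightarrow> 'n \<Rightarrow> 'n \<Rightarrow> real"
  fixes i :: 'n
  assumes n2: "CARD('n) \<ge> 2"
    and c2: "c2 \<ge> 0"
    and h2: "c2 + 1 \<ge> 2 * real CARD('n)"
    and h3: "c1 \<ge> 3 * c2 + 3 + (c2 + 1)^2"
    and A_def: "\<And>i j k. A i j k =
       (if i = j \<and> j = k then c1
        else if i \<noteq> j \<and> j \<noteq> k \<and> i \<noteq> k then -1
        else c2)"
  shows "is_SOS (tensor_F A i)"
proof -
  define U where "U = UNIV - {i}"
  have cU: "card U = CARD('n) - 1" unfolding U_def by (simp add: card_Diff_singleton)
  define m where "m = real (card U)"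
  have m1: "m \<ge> 1" using n2 cU unfolding m_def by simp
  have mn: "real CARD('n) = m + 1" using n2 cU unfolding m_def by simp
  define d where "d = (c2 + 1) / m - 1"
  have "(c2 + 1) / m \<ge> 2" using h2 mn m1 by (simp add: field_simps)
  hence d1: "d \<ge> 1" unfolding d_def by simp
  define e where "e = c1 - c2^2 / d"
  have "c2^2 / d \<le> c2^2" using d1 by (simp add: divide_le_eq mult_le_cancel_left1)
  moreover have "c2^2 \<le> c1" using h3 c2 by (smt (verit) power_mono)
  ultimately have e0: "e \<ge> 0" unfolding e_def by simp
  obtain xs where xs: "distinct xs" "set xs = U" using finite_distinct_list[of U] by auto
  define S where "S = (\<lambda>x::real^'n. \<Sum>j\<in>U. x$j)"
  define ps where "ps = [(\<lambda>x. sqrt d * (S x + c2/d * x$i)), (\<lambda>x. sqrt e * x$i)]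
     @ map (\<lambda>j x. sqrt (c2+1) * (x$j - S x / m)) xs"
  have pS: "S \<in> poly_fun" unfolding S_def by (rule pf_sum) (simp add: pf_var)
  have "\<forall>p\<in>set ps. p \<in> poly_fun"
  proof -
    have a: "(\<lambda>x. sqrt d * (S x + c2/d * x$i)) \<in> poly_fun"
      by (intro pf_scale pf_add pS pf_var)
    have b: "(\<lambda>x. sqrt e * x$i) \<in> poly_fun" by (intro pf_scale pf_var)
    have c: "(\<lambda>x. sqrt (c2+1) * (x$j - S x / m)) \<in> poly_fun" for j
    proof -
      have "(\<lambda>x. x$j + (-1/m) * S x) \<in> poly_fun" by (intro pf_add pf_var pf_scale pS)
      hence "(\<lambda>x. sqrt (c2+1) * (x$j + (-1/m) * S x)) \<in> poly_fun" by (rule pf_scale)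
      moreover have "(\<lambda>x. sqrt (c2+1) * (x$j + (-1/m) * S x)) = (\<lambda>x. sqrt (c2+1) * (x$j - S x / m))"
        by (simp add: field_simps)
      ultimately show ?thesis by simp
    qed
    show ?thesis unfolding ps_def using a b c by auto
  qed
  moreover have "\<forall>x. tensor_F A i x = (\<Sum>p\<leftarrow>ps. (p x)^2)"
  proof
    fix x :: "real^'n"
    have sl: "(\<Sum>p\<leftarrow>ps. (p x)^2) = (sqrt d * (S x + c2/d * x$i))^2 + (sqrt e * x$i)^2
       + (\<Sum>j\<in>U. (sqrt (c2+1) * (x$j - S x / m))^2)"
      unfolding ps_def using xs by (simp add: comp_def sum_list_distinct_conv_sum_set)
    also have "\<dots> = d * (S x + c2/d * x$i)^2 + e * (x$i)^2 + (c2+1) * (\<Sum>j\<in>U. (x$j - S x / m)^2)"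
      using d1 e0 c2 by (simp add: power_mult_distrib sum_distrib_left)
    also have "(\<Sum>j\<in>U. (x$j - S x / m)^2) = (\<Sum>j\<in>U. (x$j)^2) - (S x)^2 / m"
      using mean_sq[of U "\<lambda>j. x$j"] m1 unfolding S_def m_def by simp
    also have "d * (S x + c2/d * x$i)^2 + e * (x$i)^2 + (c2+1) * ((\<Sum>j\<in>U. (x$j)^2) - (S x)^2 / m)
        = c1 * (x$i)^2 + 2 * c2 * x$i * S x + (c2+1) * (\<Sum>j\<in>U. (x$j)^2) - (S x)^2"
    proof -
      have "c2 + 1 = (d+1) * m" using m1 unfolding d_def by simp
      then show ?thesis using alg_id[where d=d and m=m and k="c2+1" and bb=c2 and t="x$i" and s="S x" and q="\<Sum>j\<in>U. (x$j)^2" and aa=c1] d1 m1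
        unfolding e_def by simp
    qed
    also have "\<dots> = tensor_F A i x"
      using F_formula[OF A_def, of i x] unfolding S_def U_def by simp
    finally show "tensor_F A i x = (\<Sum>p\<leftarrow>ps. (p x)^2)" by simp
  qed
  ultimately show ?thesis unfolding is_SOS_def by blast
qed

theorem corollary4p3:
  fixes c1 c2 :: real and A :: "'n::finite \<Rightarrow> 'n \<Rightarrow> 'n \<Rightarrow> real"
  assumes n2: "CARD('n) \<ge> 2"
    and c1: "c1 \<ge> 0" and c2: "c2 \<ge> 0"
    and h1: "c1 - 3 * c2 - 3 \<ge> 0"
    and h2: "c2 + 1 \<ge> 2 * real CARD('n)"
    and h3: "c1 \<ge> 3 * c2 + 3 + (c2 + 1)^2"
    and A_def: "\<And>i j k. A i j k =
       (if i = j \<and> j = k then c1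
        else if i \<noteq> j \<and> j \<noteq> k \<and> i \<noteq> k then -1
        else c2)"
  shows "strongly_SOS A \<and> (CARD('n) \<ge> 3 \<longrightarrow> (\<exists>i j k. A i j k < 0))"
proof
  have "symmetric_tensor3 A" unfolding symmetric_tensor3_def by (auto simp: A_def)
  moreover have "\<forall>i. is_SOS (tensor_F A i)"
    using sos_i[OF n2 c2 h2 h3 A_def] by blast
  ultimately show "strongly_SOS A" unfolding strongly_SOS_def by blast
next
  show "CARD('n) \<ge> 3 \<longrightarrow> (\<exists>i j k. A i j k < 0)"
  proof
    assume n3: "CARD('n) \<ge> 3"
    obtain i :: 'n where True by blast
    have "card (UNIV - {i}) \<ge> 2" using n3 by (simp add: card_Diff_singleton)
    then obtain j where j: "j \<in> UNIV - {i}"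
      by (metis all_not_in_conv card.empty not_numeral_le_zero)
    have "card (UNIV - {i} - {j}) \<ge> 1" using n3 j by (simp add: card_Diff_singleton)
    then obtain k where k: "k \<in> UNIV - {i} - {j}"
      by (metis all_not_in_conv card.empty not_one_le_zero)
    have "A i j k = -1" using j k by (auto simp: A_def)
    then show "\<exists>i j k. A i j k < 0" by (metis neg_less_0_iff_less zero_less_one)
  qed
qed

end
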